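(* Let $\mathcal{A}$ be an arrangement of distinct lines in $\mathbb{P}^2_{\mathbb{C}}$. If $\mathcal{R}(I(\mathcal{A}))$ is disconnected (in the classical topology), then there exists a nonempty subarrangement $\mathcal{A}'\subset\mathcal{A}$ such that $|\operatorname{mult}(\mathcal{A}')\cap H|\ge 3$ for all $H\in\mathcal{A}'$.
   Context: $\operatorname{mult}(\mathcal{B})$ is the set of points of $\mathbb{P}^2$ lying on at least three lines of the arrangement $\mathcal{B}$. Lines are identified with points of $(\mathbb{P}^2)^*$ via their coefficients; $I(\mathcal{A})$ is the set of triples $\{i,j,k\}$ with $H_i\cap H_j\cap H_k\neq\emptyset$; $\mathcal{R}(I)=\{(H_1,\dots,H_n)\in((\mathbb{P}^2)^* )^n: H_i\ne H_j\ (i\ne j),\ \det(H_i,H_j,H_k)=0 \text{ iff } \{i,j,k\}\in I\}$, where $\det$ is the determinant of the coefficient rows. *)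

theory Defs
  imports "HOL-Analysis.Analysis"
begin

text \<open>Points of the complex projective plane P^2 (and of its dual) are represented
  as equivalence classes of nonzero vectors in C^3 under nonzero scaling.\<close>

definition proj_pt :: "complex^3 \<Rightarrow> (complex^3) set" where
  "proj_pt v = {c *s v | c. c \<noteq> 0}"

definition P2 :: "(complex^3) set set" where
  "P2 = {proj_pt v | v. v \<noteq> 0}"

definition pair3 :: "complex^3 \<Rightarrow> complex^3 \<Rightarrow> complex" where
  "pair3 a x = (\<Sum>k\<in>UNIV. a $ k * x $ k)"

definition on_line :: "complex^3 \<Rightarrow> (complex^3) set \<Rightarrow> bool" where
  "on_line a p \<longleftrightarrow> (\<exists>x. x \<noteq> 0 \<and> p = proj_pt x \<and> pair3 a x = 0)"

definition line_pts :: "complex^3 \<Rightarrow> (complex^3) set set" where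
  "line_pts a = {p \<in> P2. on_line a p}"

definition det3 :: "complex^3 \<Rightarrow> complex^3 \<Rightarrow> complex^3 \<Rightarrow> complex" where
  "det3 a b c = det ((\<chi> r. if r = 1 then a else if r = 2 then b else c) :: complex^3^3)"

definition line_arrangement :: "(complex^3)^'n::finite \<Rightarrow> bool" where
  "line_arrangement H \<longleftrightarrow> (\<forall>i. H $ i \<noteq> 0) \<and>
     (\<forall>i j. i \<noteq> j \<longrightarrow> proj_pt (H $ i) \<noteq> proj_pt (H $ j))"

definition mult_pts :: "(complex^3)^'n::finite \<Rightarrow> 'n set \<Rightarrow> (complex^3) set set" where
  "mult_pts H S = {p \<in> P2. card {i \<in> S. on_line (H $ i) p} \<ge> 3}"

definition intersection_lattice :: "(complex^3)^'n::finite \<Rightarrow> 'n set set" where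
  "intersection_lattice H = {{i, j, k} | i j k. i \<noteq> j \<and> j \<noteq> k \<and> i \<noteq> k \<and>
      line_pts (H $ i) \<inter> line_pts (H $ j) \<inter> line_pts (H $ k) \<noteq> {}}"

definition nonzero_tuples :: "((complex^3)^'n::finite) set" where
  "nonzero_tuples = {H. \<forall>i. H $ i \<noteq> 0}"

definition proj_tuple :: "(complex^3)^'n::finite \<Rightarrow> ('n::finite \<Rightarrow> (complex^3) set)" where
  "proj_tuple H = (\<lambda>i. proj_pt (H $ i))"

text \<open>Classical topology on ((P^2)^* )^n: quotient topology of the Euclidean
  topology on (C^3 - 0)^n under the projection.\<close>
definition proj_tuple_topology :: "('n::finite \<Rightarrow> (complex^3) set) topology" where
  "proj_tuple_topology = topology (\<lambda>U. U \<subseteq> proj_tuple ` nonzero_tuples \<and>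
      openin (top_of_set nonzero_tuples) {H \<in> nonzero_tuples. proj_tuple H \<in> U})"

lemma istopology_proj_tuple:
  "istopology (\<lambda>U. U \<subseteq> proj_tuple ` nonzero_tuples \<and>
      openin (top_of_set nonzero_tuples) {H \<in> nonzero_tuples. proj_tuple H \<in> U})"
proof -
  have 1: "{H \<in> nonzero_tuples. proj_tuple H \<in> S \<inter> T} =
     {H \<in> nonzero_tuples. proj_tuple H \<in> S} \<inter> {H \<in> nonzero_tuples. proj_tuple H \<in> T}" for S T
    by auto
  have 2: "{H \<in> nonzero_tuples. proj_tuple H \<in> \<Union>K} =
     \<Union>((\<lambda>U. {H \<in> nonzero_tuples. proj_tuple H \<in> U}) ` K)" for K
    by auto
  show ?thesis unfolding istopology_def 1 2 by (auto intro: openin_Union)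
qed

definition realization_space :: "'n set set \<Rightarrow> ('n::finite \<Rightarrow> (complex^3) set) set" where
  "realization_space I = {proj_tuple G | G. G \<in> nonzero_tuples \<and>
      (\<forall>i j. i \<noteq> j \<longrightarrow> proj_pt (G $ i) \<noteq> proj_pt (G $ j)) \<and>
      (\<forall>i j k. i \<noteq> j \<and> j \<noteq> k \<and> i \<noteq> k \<longrightarrow>
          (det3 (G $ i) (G $ j) (G $ k) = 0 \<longleftrightarrow> {i, j, k} \<in> I))}"

end

theory Submission
  imports Defs "HOL-Computational_Algebra.Polynomial"
begin

definition cross :: "complex^3 \<Rightarrow> complex^3 \<Rightarrow> complex^3" where
  "cross u v = vector [u$2* v$3 - u$3* v$2, u$3* v$1 - u$1* v$3, u$1* v$2 - u$2* v$1]"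

lemma vec3_eq: "(u::complex^3) = v \<longleftrightarrow> u$1 = v$1 \<and> u$2 = v$2 \<and> u$3 = v$3"
  by (simp add: vec_eq_iff forall_3)

lemma cross_nth[simp]: "cross u v $ 1 = u$2* v$3 - u$3* v$2" "cross u v $ 2 = u$3* v$1 - u$1* v$3"
  "cross u v $ 3 = u$1* v$2 - u$2* v$1"
  by (simp_all add: cross_def)

lemma pair3_exp: "pair3 a x = a$1* x$1 + a$2* x$2 + a$3* x$3"
  by (simp add: pair3_def sum_3)

lemma det3_exp: "det3 a b c = pair3 c (cross a b)"
  unfolding det3_def det_3 pair3_exp by (simp add: algebra_simps)

lemma det3_rot: "det3 a b c = det3 b c a" "det3 a b c = - det3 b a c"
  unfolding det3_exp pair3_exp by (simp_all add: algebra_simps)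

lemma det3_rep: "det3 a a c = 0" "det3 a b a = 0" "det3 a b b = 0"
  unfolding det3_exp pair3_exp by (simp_all add: algebra_simps)

lemma det3_lin: "det3 x y (s *s a + t *s b) = s * det3 x y a + t * det3 x y b"
  unfolding det3_exp pair3_exp by (simp add: algebra_simps)

lemma det3_scale: "det3 (a *s x) (b *s y) (c *s z) = a*b*c * det3 x y z"
  unfolding det3_exp pair3_exp by (simp add: algebra_simps)

lemma cross_scale: "cross (a *s x) (b *s y) = (a*b) *s cross x y"
  by (simp add: vec3_eq algebra_simps)

lemma pair3_cross: "pair3 a (cross a b) = 0" "pair3 b (cross a b) = 0"
  unfolding pair3_exp by (simp_all add: algebra_simps)

lemma cross_cross: "cross (cross a b) x = pair3 a x *s b - pair3 b x *s a"
  unfolding pair3_exp by (simp add: vec3_eq algebra_simps)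

lemma cross_cross2: "cross (cross a b) (cross c d) = det3 c d a *s b - det3 c d b *s a"
  unfolding det3_exp pair3_exp by (simp add: vec3_eq algebra_simps)

lemma cross_anti: "cross a b = - cross b a"
  by (simp add: vec3_eq algebra_simps)

lemma cross_self: "cross a a = 0"
  by (simp add: vec3_eq algebra_simps)

lemma L0:
  assumes "u \<noteq> 0" "cross u x = 0"
  shows "\<exists>c. x = c *s u"
proof -
  have e: "u$2* x$3 = u$3* x$2" "u$3* x$1 = u$1* x$3" "u$1* x$2 = u$2* x$1"
    using assms(2) by (auto simp: vec3_eq)
  have "u$1 \<noteq> 0 \<or> u$2 \<noteq> 0 \<or> u$3 \<noteq> 0" using assms(1) by (auto simp: vec3_eq)
  then show ?thesis
  proof (elim disjE)
    assume h: "u$1 \<noteq> 0"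
    show ?thesis
      by (rule exI[of _ "x$1/u$1"]) (use h e in \<open>auto simp: vec3_eq field_simps\<close>)
  next
    assume h: "u$2 \<noteq> 0"
    show ?thesis
      by (rule exI[of _ "x$2/u$2"]) (use h e in \<open>auto simp: vec3_eq field_simps\<close>)
  next
    assume h: "u$3 \<noteq> 0"
    show ?thesis
      by (rule exI[of _ "x$3/u$3"]) (use h e in \<open>auto simp: vec3_eq field_simps\<close>)
  qed
qed

lemma cross_zero_iff: "u \<noteq> 0 \<Longrightarrow> cross u x = 0 \<longleftrightarrow> (\<exists>c. x = c *s u)"
  using L0[of u x] by (auto simp: vec3_eq algebra_simps)

lemma span_aux:
  fixes a1 a2 a3 b1 b2 b3 k1 k2 k3 :: complex
  assumes h: "a1*b2 - a2*b1 \<noteq> 0"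
    and d: "k1*(a2*b3 - a3*b2) + k2*(a3*b1 - a1*b3) + k3*(a1*b2 - a2*b1) = 0"
  shows "\<exists>s t. k1 = s*a1 + t*b1 \<and> k2 = s*a2 + t*b2 \<and> k3 = s*a3 + t*b3"
proof -
  define D where "D = a1*b2 - a2*b1"
  define s where "s = (k1*b2 - k2*b1)/D"
  define t where "t = (a1*k2 - a2*k1)/D"
  have D: "D \<noteq> 0" using h D_def by simp
  have sD: "s*D = k1*b2 - k2*b1" and tD: "t*D = a1*k2 - a2*k1" using D by (simp_all add: s_def t_def)
  have "D*(s*a1 + t*b1) = D*k1" "D*(s*a2 + t*b2) = D*k2" "D*(s*a3 + t*b3) = D*k3"
  proof -
    have "D*(s*a1 + t*b1) = (s*D)*a1 + (t*D)*b1" by (simp add: algebra_simps)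
    also have "\<dots> = D*k1" by (simp only: sD tD) (simp add: D_def algebra_simps)
    finally show "D*(s*a1 + t*b1) = D*k1" .
    have "D*(s*a2 + t*b2) = (s*D)*a2 + (t*D)*b2" by (simp add: algebra_simps)
    also have "\<dots> = D*k2" by (simp only: sD tD) (simp add: D_def algebra_simps)
    finally show "D*(s*a2 + t*b2) = D*k2" .
    have "D*(s*a3 + t*b3) = (s*D)*a3 + (t*D)*b3" by (simp add: algebra_simps)
    also have "\<dots> = D*k3 - (k1*(a2*b3 - a3*b2) + k2*(a3*b1 - a1*b3) + k3*(a1*b2 - a2*b1))"
      by (simp only: sD tD) (simp add: D_def algebra_simps)
    also have "\<dots> = D*k3" using d by simp
    finally show "D*(s*a3 + t*b3) = D*k3" .
  qed
  then show ?thesis using D by (intro exI[of _ s] exI[of _ t]) simp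
qed

lemma span2:
  assumes "cross a b \<noteq> 0" "det3 a b k = 0"
  shows "\<exists>s t. k = s *s a + t *s b"
proof -
  have d: "k$1*(a$2*b$3 - a$3*b$2) + k$2*(a$3*b$1 - a$1*b$3) + k$3*(a$1*b$2 - a$2*b$1) = 0"
    using assms(2) unfolding det3_exp pair3_exp by simp
  have "a$2*b$3 - a$3*b$2 \<noteq> 0 \<or> a$3*b$1 - a$1*b$3 \<noteq> 0 \<or> a$1*b$2 - a$2*b$1 \<noteq> 0"
    using assms(1) by (auto simp: vec3_eq)
  then show ?thesis
  proof (elim disjE)
    assume h: "a$1*b$2 - a$2*b$1 \<noteq> 0"
    from span_aux[OF h d] show ?thesis by (auto simp: vec3_eq)
  next
    assume h: "a$2*b$3 - a$3*b$2 \<noteq> 0"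
    have d': "k$2*(a$3*b$1 - a$1*b$3) + k$3*(a$1*b$2 - a$2*b$1) + k$1*(a$2*b$3 - a$3*b$2) = 0"
      using d by (simp add: algebra_simps)
    from span_aux[OF h d'] show ?thesis by (auto simp: vec3_eq)
  next
    assume h: "a$3*b$1 - a$1*b$3 \<noteq> 0"
    have d': "k$3*(a$1*b$2 - a$2*b$1) + k$1*(a$2*b$3 - a$3*b$2) + k$2*(a$3*b$1 - a$1*b$3) = 0"
      using d by (simp add: algebra_simps)
    from span_aux[OF h d'] show ?thesis by (auto simp: vec3_eq)
  qed
qed

lemma indep2:
  assumes "cross a b \<noteq> 0" "s *s a + t *s b = 0"
  shows "s = 0 \<and> t = 0"
proof -
  have "cross (s *s a + t *s b) b = s *s cross a b" "cross a (s *s a + t *s b) = t *s cross a b"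
    by (simp_all add: vec3_eq algebra_simps)
  then show ?thesis using assms by (auto simp: vec3_eq)
qed

lemma pair3_scale: "pair3 a (c *s x) = c * pair3 a x"
  unfolding pair3_exp by (simp add: algebra_simps)

lemma proj_pt_scale:
  assumes c: "c \<noteq> 0" shows "proj_pt (c *s v) = proj_pt v"
  unfolding proj_pt_def
proof (intro set_eqI iffI)
  fix x assume "x \<in> {d *s (c *s v) |d. d \<noteq> 0}"
  then obtain d where d: "x = d *s (c *s v)" "d \<noteq> 0" by auto
  then show "x \<in> {d *s v |d. d \<noteq> 0}" using c by (auto intro!: exI[of _ "d*c"] simp: vector_smult_assoc)
next
  fix x assume "x \<in> {d *s v |d. d \<noteq> 0}"
  then obtain d where d: "x = d *s v" "d \<noteq> 0" by auto
  then show "x \<in> {d *s (c *s v) |d. d \<noteq> 0}" using c by (auto intro!: exI[of _ "d/c"] simp: vector_smult_assoc)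
qed

lemma in_proj_pt_self: "v \<in> proj_pt v"
  unfolding proj_pt_def by (intro CollectI exI[of _ 1]) simp

lemma proj_pt_eq_iff:
  assumes "u \<noteq> 0" "v \<noteq> 0"
  shows "proj_pt u = proj_pt v \<longleftrightarrow> cross u v = 0"
proof
  assume "proj_pt u = proj_pt v"
  then have "v \<in> proj_pt u" using in_proj_pt_self by metis
  then obtain c where "v = c *s u" unfolding proj_pt_def by auto
  then show "cross u v = 0" using cross_scale[of 1 u c u] cross_self[of u] by simp
next
  assume "cross u v = 0"
  then obtain c where c: "v = c *s u" using L0 assms by blast
  then have "c \<noteq> 0" using assms by auto
  then show "proj_pt u = proj_pt v" using c proj_pt_scale by simp
qed

lemma on_line_proj:
  assumes "x \<noteq> 0"
  shows "on_line a (proj_pt x) \<longleftrightarrow> pair3 a x = 0"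
proof
  assume "on_line a (proj_pt x)"
  then obtain y where y: "y \<noteq> 0" "proj_pt x = proj_pt y" "pair3 a y = 0" unfolding on_line_def by auto
  then have "cross x y = 0" using proj_pt_eq_iff assms by blast
  then obtain c where "y = c *s x" using L0 assms by blast
  then have "c \<noteq> 0" "c * pair3 a x = 0" using y pair3_scale by auto
  then show "pair3 a x = 0" by simp
qed (use assms in \<open>auto simp: on_line_def\<close>)

lemma line_pts_elim:
  assumes "P \<in> line_pts a"
  obtains x where "x \<noteq> 0" "P = proj_pt x" "pair3 a x = 0"
  using assms unfolding line_pts_def on_line_def by auto

lemma pt_cross:
  assumes "P \<in> line_pts a" "P \<in> line_pts b" "cross a b \<noteq> 0"
  shows "P = proj_pt (cross a b)"
proof -
  obtain x where x: "x \<noteq> 0" "P = proj_pt x" "pair3 a x = 0" using assms(1) line_pts_elim by blast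
  have "on_line b P" using assms(2) unfolding line_pts_def by auto
  then have "pair3 b x = 0" using on_line_proj x by auto
  then have "cross (cross a b) x = 0" using x cross_cross by simp
  then have "proj_pt (cross a b) = proj_pt x" using proj_pt_eq_iff assms(3) x(1) by blast
  then show ?thesis using x by simp
qed

lemma arr_cross:
  assumes "line_arrangement H" "i \<noteq> j"
  shows "cross (H$i) (H$j) \<noteq> 0"
  using assms proj_pt_eq_iff unfolding line_arrangement_def by blast

lemma arr_nz: "line_arrangement H \<Longrightarrow> H$i \<noteq> 0"
  unfolding line_arrangement_def by blast

lemma two_elems: "2 \<le> card X \<Longrightarrow> \<exists>a b. a \<in> X \<and> b \<in> X \<and> a \<noteq> b"
  by (metis card_2_iff' card_le_Suc_iff numeral_2_eq_2 insert_iff)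

definition line :: "(complex^3)^'n \<Rightarrow> (complex^3)^'n \<Rightarrow> complex \<Rightarrow> (complex^3)^'n" where
  "line a b l = (\<chi> i. \<chi> m. a$i$m + l * (b$i$m - a$i$m))"

definition plin :: "((complex^3)^'n \<Rightarrow> complex) \<Rightarrow> bool" where
  "plin g \<longleftrightarrow> (\<forall>a b. \<exists>p. \<forall>l. g (line a b l) = poly p l)"

definition plv :: "((complex^3)^'n \<Rightarrow> complex^3) \<Rightarrow> bool" where
  "plv F \<longleftrightarrow> (\<forall>m. plin (\<lambda>z. F z $ m))"

lemma line_0[simp]: "line a b 0 = a" and line_1[simp]: "line a b 1 = b"
  by (simp_all add: line_def vec_eq_iff)

lemma plin_const: "plin (\<lambda>z. c)"
  unfolding plin_def by (auto intro: exI[of _ "[:c:]"])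

lemma plin_coord: "plin (\<lambda>z::(complex^3)^'n. z$i$m)"
  unfolding plin_def line_def
proof (intro allI)
  fix a b :: "(complex^3)^'n"
  show "\<exists>p. \<forall>l. (\<chi> i. \<chi> m. a$i$m + l * (b$i$m - a$i$m)) $ i $ m = poly p l"
    by (rule exI[of _ "[:a$i$m, b$i$m - a$i$m:]"]) (simp add: algebra_simps)
qed

lemma plin_add: "plin f \<Longrightarrow> plin g \<Longrightarrow> plin (\<lambda>z. f z + g z)"
  unfolding plin_def by (metis poly_add)

lemma plin_diff: "plin f \<Longrightarrow> plin g \<Longrightarrow> plin (\<lambda>z. f z - g z)"
  unfolding plin_def by (metis poly_diff)

lemma plin_mult: "plin f \<Longrightarrow> plin g \<Longrightarrow> plin (\<lambda>z. f z * g z)"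
  unfolding plin_def by (metis poly_mult)

lemmas plin_intros = plin_const plin_coord plin_add plin_diff plin_mult

lemma plv_comp: "plv F \<Longrightarrow> plin (\<lambda>z. F z $ m)"
  unfolding plv_def by blast

lemma plv_coord: "plv (\<lambda>z. z$i)"
  unfolding plv_def by (simp add: plin_coord)

lemma plv_cross: "plv F \<Longrightarrow> plv G \<Longrightarrow> plv (\<lambda>z. cross (F z) (G z))"
  unfolding plv_def by (auto simp: forall_3 intro!: plin_intros)

lemma plv_comb: "plin s \<Longrightarrow> plin t \<Longrightarrow> plv F \<Longrightarrow> plv G \<Longrightarrow> plv (\<lambda>z. s z *s F z + t z *s G z)"
  unfolding plv_def by (auto intro!: plin_intros)

lemma plin_det3: "plv F \<Longrightarrow> plv G \<Longrightarrow> plv K \<Longrightarrow> plin (\<lambda>z. det3 (F z) (G z) (K z))"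
  unfolding det3_exp pair3_exp using plv_cross[of F G] unfolding plv_def by (auto intro!: plin_intros)

lemma plin_finite:
  assumes "plin g" "g z1 \<noteq> 0"
  shows "finite {l. g (line z1 z2 l) = 0}"
proof -
  obtain p where p: "\<And>l. g (line z1 z2 l) = poly p l" using assms(1) unfolding plin_def by blast
  have "poly p 0 \<noteq> 0" using p[of 0] assms(2) by simp
  then have "p \<noteq> 0" by auto
  then show ?thesis using poly_roots_finite p by simp
qed

lemma plv_finite:
  assumes "plv F" "F z1 \<noteq> 0"
  shows "finite {l. F (line z1 z2 l) = 0}"
proof -
  obtain m where m: "F z1 $ m \<noteq> 0" using assms(2) by (auto simp: vec_eq_iff)
  have "finite {l. F (line z1 z2 l) $ m = 0}" using plin_finite[OF plv_comp[OF assms(1)] m] .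
  then show ?thesis by (rule rev_finite_subset) auto
qed

lemma plin_cont:
  assumes "plin g"
  shows "continuous_on UNIV (\<lambda>l. g (line z1 z2 l))"
proof -
  obtain p where p: "\<And>l. g (line z1 z2 l) = poly p l" using assms(1) unfolding plin_def by blast
  show ?thesis unfolding p by (intro continuous_intros)
qed

lemma openin_ptt: "openin proj_tuple_topology U \<longleftrightarrow> U \<subseteq> proj_tuple ` nonzero_tuples \<and>
      openin (top_of_set nonzero_tuples) {H \<in> nonzero_tuples. proj_tuple H \<in> U}"
  unfolding proj_tuple_topology_def topology_inverse'[OF istopology_proj_tuple] by simp

lemma topspace_ptt: "topspace (proj_tuple_topology :: ('n::finite \<Rightarrow> _) topology) = proj_tuple ` (nonzero_tuples :: ((complex^3)^'n) set)"
proof -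
  have "openin proj_tuple_topology (proj_tuple ` (nonzero_tuples :: ((complex^3)^'n) set))"
  proof -
    have "{H \<in> (nonzero_tuples :: ((complex^3)^'n) set). proj_tuple H \<in> proj_tuple ` nonzero_tuples} = nonzero_tuples" by auto
    then show ?thesis unfolding openin_ptt by simp
  qed
  moreover have "\<And>U. openin proj_tuple_topology U \<Longrightarrow> U \<subseteq> proj_tuple ` nonzero_tuples"
    using openin_ptt by blast
  ultimately show ?thesis unfolding topspace_def by blast
qed

lemma cont_proj_tuple: "continuous_map (top_of_set nonzero_tuples) proj_tuple_topology proj_tuple"
  unfolding continuous_map_def topspace_ptt using openin_ptt by auto

definition conc :: "(complex^3)^'n::finite \<Rightarrow> 'n \<Rightarrow> 'n \<Rightarrow> 'n \<Rightarrow> bool" where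
  "conc H x y k \<longleftrightarrow> line_pts (H$x) \<inter> line_pts (H$y) \<inter> line_pts (H$k) \<noteq> {}"

definition realG :: "(complex^3)^'n::finite \<Rightarrow> (complex^3)^'n \<Rightarrow> bool" where
  "realG H G \<longleftrightarrow> (\<forall>i. G$i \<noteq> 0) \<and> (\<forall>i j. i \<noteq> j \<longrightarrow> proj_pt (G$i) \<noteq> proj_pt (G$j)) \<and>
     (\<forall>i j k. i \<noteq> j \<and> j \<noteq> k \<and> i \<noteq> k \<longrightarrow>
        (det3 (G$i) (G$j) (G$k) = 0 \<longleftrightarrow> {i,j,k} \<in> intersection_lattice H))"

definition good :: "(complex^3)^'n::finite \<Rightarrow> ((complex^3)^'n \<Rightarrow> (complex^3)^'n) \<Rightarrow> 'n set \<Rightarrow> bool" where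
  "good H \<Phi> S \<longleftrightarrow> (\<forall>i\<in>S. plv (\<lambda>z. \<Phi> z $ i)) \<and>
     (\<forall>z. \<forall>x\<in>S. \<forall>y\<in>S. \<forall>k\<in>S. x \<noteq> y \<longrightarrow> y \<noteq> k \<longrightarrow> x \<noteq> k \<longrightarrow> conc H x y k \<longrightarrow>
        det3 (\<Phi> z $ x) (\<Phi> z $ y) (\<Phi> z $ k) = 0) \<and>
     (\<forall>G. realG H G \<longrightarrow> (\<exists>z. \<forall>i\<in>S. \<exists>c. c \<noteq> 0 \<and> \<Phi> z $ i = c *s G$i)) \<and>
     (\<forall>z z'. (\<forall>i\<in>S. z$i = z'$i) \<longrightarrow> (\<forall>i\<in>S. \<Phi> z $ i = \<Phi> z' $ i))"

definition upd :: "(complex^3)^'n \<Rightarrow> 'n \<Rightarrow> complex^3 \<Rightarrow> (complex^3)^'n" where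
  "upd z j w = (\<chi> i. if i = j then w else z$i)"

lemma conc_sym: "conc H x y k = conc H y k x" "conc H x y k = conc H y x k"
  unfolding conc_def by (simp_all add: Int_ac)

lemma conc_Inter: "conc H x y k \<longleftrightarrow> \<Inter> ((\<lambda>i. line_pts (H$i)) ` {x,y,k}) \<noteq> {}"
  unfolding conc_def by (simp add: Int_ac)

lemma I_iff:
  assumes "x \<noteq> y" "y \<noteq> k" "x \<noteq> k"
  shows "{x,y,k} \<in> intersection_lattice H \<longleftrightarrow> conc H x y k"
proof
  assume "{x,y,k} \<in> intersection_lattice H"
  then obtain i j l where e: "{x,y,k} = {i,j,l}" and c: "conc H i j l"
    unfolding intersection_lattice_def mem_Collect_eq conc_def by auto
  show "conc H x y k" using c unfolding conc_Inter e .
next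
  assume c: "conc H x y k"
  have h: "{x,y,k} = {x,y,k} \<and> x \<noteq> y \<and> y \<noteq> k \<and> x \<noteq> k \<and>
     line_pts (H$x) \<inter> line_pts (H$y) \<inter> line_pts (H$k) \<noteq> {}"
    using assms c unfolding conc_def by simp
  show "{x,y,k} \<in> intersection_lattice H"
    unfolding intersection_lattice_def mem_Collect_eq
    apply (rule exI, rule exI, rule exI) by (rule h)
qed

lemma realG_D3:
  assumes "realG H G" "i \<noteq> j" "j \<noteq> k" "i \<noteq> k"
  shows "det3 (G$i) (G$j) (G$k) = 0 \<longleftrightarrow> {i,j,k} \<in> intersection_lattice H"
proof -
  have "\<forall>i j k. i \<noteq> j \<and> j \<noteq> k \<and> i \<noteq> k \<longrightarrow>
        (det3 (G$i) (G$j) (G$k) = 0 \<longleftrightarrow> {i,j,k} \<in> intersection_lattice H)"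
    using assms(1) unfolding realG_def by (elim conjE)
  then show ?thesis using assms(2-4) by blast
qed

lemma realG_conc_det: "realG H G \<Longrightarrow> x \<noteq> y \<Longrightarrow> y \<noteq> k \<Longrightarrow> x \<noteq> k \<Longrightarrow> conc H x y k \<Longrightarrow>
   det3 (G$x) (G$y) (G$k) = 0"
  using realG_D3[of H G x y k] I_iff[of x y k H] by blast

lemma realG_det_conc: "realG H G \<Longrightarrow> x \<noteq> y \<Longrightarrow> y \<noteq> k \<Longrightarrow> x \<noteq> k \<Longrightarrow> det3 (G$x) (G$y) (G$k) = 0 \<Longrightarrow>
   conc H x y k"
  using realG_D3[of H G x y k] I_iff[of x y k H] by blast

lemma realG_nz: "realG H G \<Longrightarrow> G$i \<noteq> 0"
  unfolding realG_def by (elim conjE) blast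

lemma realG_proj: "realG H G \<Longrightarrow> i \<noteq> j \<Longrightarrow> proj_pt (G$i) \<noteq> proj_pt (G$j)"
  unfolding realG_def by (elim conjE) blast

lemma realG_cross: "realG H G \<Longrightarrow> i \<noteq> j \<Longrightarrow> cross (G$i) (G$j) \<noteq> 0"
  using realG_proj[of H G i j] realG_nz[of H G] proj_pt_eq_iff by blast

lemma upd_nth[simp]: "upd z j w $ i = (if i = j then w else z$i)"
  unfolding upd_def by simp

lemma pair_exists:
  assumes "P \<in> mult_pts H (insert j T)" "j \<notin> T"
  shows "\<exists>a\<in>T. \<exists>b\<in>T. a \<noteq> b \<and> P \<in> line_pts (H$a) \<and> P \<in> line_pts (H$b)"
proof -
  let ?A = "{i\<in>insert j T. on_line (H $ i) P}"
  have P2: "P \<in> P2" and c: "3 \<le> card ?A" using assms(1) unfolding mult_pts_def by auto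
  have "card (?A - {j}) \<ge> 2" using c by (auto simp: card_Diff_singleton_if)
  then obtain a b where "a \<in> ?A - {j}" "b \<in> ?A - {j}" "a \<noteq> b" using two_elems by blast
  then show ?thesis using P2 unfolding line_pts_def by auto
qed

lemma M_finite:
  assumes "line_arrangement H" "j \<notin> T"
  shows "finite (mult_pts H (insert j T) \<inter> line_pts (H$j))"
proof -
  have "mult_pts H (insert j T) \<inter> line_pts (H$j) \<subseteq> (\<lambda>i. proj_pt (cross (H$i) (H$j))) ` T"
  proof
    fix P assume P: "P \<in> mult_pts H (insert j T) \<inter> line_pts (H$j)"
    then obtain a where a: "a \<in> T" "P \<in> line_pts (H$a)" using pair_exists assms(2) by blast
    then have "a \<noteq> j" using assms(2) by auto
    then have "P = proj_pt (cross (H$a) (H$j))" using pt_cross a P arr_cross assms(1) by blast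
    then show "P \<in> (\<lambda>i. proj_pt (cross (H$i) (H$j))) ` T" using a by blast
  qed
  then show ?thesis by (rule finite_subset) simp
qed

lemma on_third:
  assumes "line_arrangement H" "realG H G" "c \<noteq> d" "Q \<in> line_pts (H$c)" "Q \<in> line_pts (H$d)"
    "det3 (G$c) (G$d) (G$a) = 0"
  shows "Q \<in> line_pts (H$a)"
proof (cases "a = c \<or> a = d")
  case True then show ?thesis using assms by auto
next
  case False
  then have "conc H c d a" using realG_det_conc[OF assms(2) assms(3) _ _ assms(6)] by metis
  then obtain R where R: "R \<in> line_pts (H$c)" "R \<in> line_pts (H$d)" "R \<in> line_pts (H$a)"
    unfolding conc_def by blast
  have "R = Q" using pt_cross[OF R(1,2)] pt_cross[OF assms(4,5)] arr_cross assms(1,3) by metis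
  then show ?thesis using R by simp
qed

lemma card3_ge:
  fixes A :: "'n::finite set"
  assumes "x \<in> A" "y \<in> A" "k \<in> A" "x \<noteq> y" "y \<noteq> k" "x \<noteq> k"
  shows "3 \<le> card A"
proof -
  have "card {x,y,k} = 3" using assms by simp
  moreover have "card {x,y,k} \<le> card A" using assms by (intro card_mono) auto
  ultimately show ?thesis by simp
qed

lemma step_generic:
  fixes H :: "(complex^3)^'n::finite"
  assumes good: "good H \<Psi> T" and jT: "j \<notin> T"
    and Nplv: "plv NEW"
    and Nloc: "\<And>z z'. (\<forall>i\<in>insert j T. z$i = z'$i) \<Longrightarrow> NEW z = NEW z'"
    and Ncomb: "\<And>P. P \<in> mult_pts H (insert j T) \<inter> line_pts (H$j) \<Longrightarrow>
       \<exists>a\<in>T. \<exists>b\<in>T. a \<noteq> b \<and> P \<in> line_pts (H$a) \<and> P \<in> line_pts (H$b) \<and>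
          (\<forall>z. \<exists>s t. NEW z = s *s \<Psi> z $ a + t *s \<Psi> z $ b)"
    and Nreal: "\<And>G z. realG H G \<Longrightarrow> (\<forall>i\<in>T. \<exists>c. c \<noteq> 0 \<and> \<Psi> z $ i = c *s G$i) \<Longrightarrow>
       \<exists>w c. c \<noteq> 0 \<and> NEW (upd z j w) = c *s G$j"
  shows "good H (\<lambda>z. \<chi> i. if i = j then NEW z else \<Psi> z $ i) (insert j T)"
proof -
  define \<Phi> where "\<Phi> = (\<lambda>z. \<chi> i. if i = j then NEW z else \<Psi> z $ i)"
  note gg = good[unfolded good_def]
  note g1 = conjunct1[OF gg] and g2 = conjunct1[OF conjunct2[OF gg]]
    and g3 = conjunct1[OF conjunct2[OF conjunct2[OF gg]]] and g4 = conjunct2[OF conjunct2[OF conjunct2[OF gg]]]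
  have Phj: "\<Phi> z $ j = NEW z" for z unfolding \<Phi>_def by simp
  have PhT: "i \<in> T \<Longrightarrow> \<Phi> z $ i = \<Psi> z $ i" for z i unfolding \<Phi>_def using jT by auto
  have key: "det3 (\<Psi> z $ x) (\<Psi> z $ y) (NEW z) = 0"
    if xy: "x \<in> T" "y \<in> T" "x \<noteq> y" and c: "conc H x y j" for z x y
  proof -
    obtain P where P: "P \<in> line_pts (H$x)" "P \<in> line_pts (H$y)" "P \<in> line_pts (H$j)"
      using c unfolding conc_def by blast
    have "P \<in> P2" using P(1) unfolding line_pts_def by blast
    moreover have "3 \<le> card {i\<in>insert j T. on_line (H $ i) P}"
      using P xy jT unfolding line_pts_def by (intro card3_ge[of x _ y j]; auto)
    ultimately have PM: "P \<in> mult_pts H (insert j T) \<inter> line_pts (H$j)"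
      unfolding mult_pts_def using P(3) by blast
    obtain a b where ab: "a \<in> T" "b \<in> T" "a \<noteq> b" "P \<in> line_pts (H$a)" "P \<in> line_pts (H$b)"
      and comb: "\<forall>z. \<exists>s t. NEW z = s *s \<Psi> z $ a + t *s \<Psi> z $ b"
      using Ncomb[OF PM] by blast
    obtain s t where st: "NEW z = s *s \<Psi> z $ a + t *s \<Psi> z $ b" using comb by blast
    have d: "det3 (\<Psi> z $ x) (\<Psi> z $ y) (\<Psi> z $ a') = 0" if "a' \<in> T" "P \<in> line_pts (H$a')" for a'
    proof -
      consider "a' = x" | "a' = y" | "a' \<noteq> x" "a' \<noteq> y" by blast
      then show ?thesis
      proof cases
        case 1 then show ?thesis by (simp add: det3_rep)
      next
        case 2 then show ?thesis by (simp add: det3_rep)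
      next
        case 3
        have "conc H x y a'" using P that unfolding conc_def by blast
        then show ?thesis using xy that 3 by (intro g2[rule_format]) auto
      qed
    qed
    show ?thesis unfolding st det3_lin using d ab by simp
  qed
  have p1: "\<forall>i\<in>insert j T. plv (\<lambda>z. \<Phi> z $ i)"
    using g1 Nplv Phj PhT by (auto simp del: vec_lambda_beta)
  have p2: "det3 (\<Phi> z $ x) (\<Phi> z $ y) (\<Phi> z $ k) = 0"
    if xs: "x \<in> insert j T" "y \<in> insert j T" "k \<in> insert j T" "x \<noteq> y" "y \<noteq> k" "x \<noteq> k"
      "conc H x y k" for z x y k
  proof -
    consider "x \<in> T" "y \<in> T" "k \<in> T" | "k = j" | "x = j" | "y = j" using xs by blast
    then show ?thesis
    proof cases
      case 1 then show ?thesis using xs PhT by (simp add: g2[rule_format])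
    next
      case 2
      then have "x \<in> T" "y \<in> T" using xs by auto
      then show ?thesis using key[of x y z] xs 2 PhT Phj by simp
    next
      case 3
      then have "y \<in> T" "k \<in> T" using xs by auto
      moreover have "conc H y k j" using xs 3 conc_sym(1)[of H x y k] by simp
      ultimately show ?thesis using key[of y k z] xs 3 PhT Phj det3_rot(1) by metis
    next
      case 4
      then have "x \<in> T" "k \<in> T" using xs by auto
      moreover have "conc H k x j" using xs 4 conc_sym(1)[of H x y k] conc_sym(1)[of H y k x] by simp
      ultimately show ?thesis using key[of k x z] xs 4 PhT Phj det3_rot(1) by metis
    qed
  qed
  have p3: "\<exists>z. \<forall>i\<in>insert j T. \<exists>c. c \<noteq> 0 \<and> \<Phi> z $ i = c *s G$i" if G: "realG H G" for G
  proof -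
    obtain z where z: "\<forall>i\<in>T. \<exists>c. c \<noteq> 0 \<and> \<Psi> z $ i = c *s G$i" using g3 G by blast
    obtain w c where wc: "c \<noteq> 0" "NEW (upd z j w) = c *s G$j" using Nreal[OF G z] by blast
    have "\<forall>i\<in>T. \<Psi> (upd z j w) $ i = \<Psi> z $ i" using g4 jT by (metis upd_nth)
    then show ?thesis using z wc PhT Phj by (intro exI[of _ "upd z j w"]) auto
  qed
  have p4: "\<forall>i\<in>insert j T. \<Phi> z $ i = \<Phi> z' $ i" if "\<forall>i\<in>insert j T. z$i = z'$i" for z z'
  proof -
    have "\<forall>i\<in>T. z $ i = z' $ i" using that by blast
    then have "\<forall>i\<in>T. \<Psi> z $ i = \<Psi> z' $ i" using g4 by blast
    moreover have "NEW z = NEW z'" using Nloc that by blast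
    ultimately show ?thesis using PhT Phj by auto
  qed
  show ?thesis unfolding \<Phi>_def[symmetric] good_def
    apply (intro conjI)
    subgoal by (rule p1)
    subgoal using p2 by blast
    subgoal using p3 by blast
    subgoal using p4 by blast
    done
qed

lemma card_cases3:
  assumes "finite M" "card M < 3"
  shows "M = {} \<or> (\<exists>P. M = {P}) \<or> (\<exists>P Q. P \<noteq> Q \<and> M = {P,Q})"
proof -
  have "card M = 0 \<or> card M = 1 \<or> card M = 2" using assms(2) by arith
  then show ?thesis using assms(1) by (auto simp: card_1_singleton_iff card_2_iff)
qed

lemma smult_cancel: "c \<noteq> 0 \<Longrightarrow> (s / c) *s (c *s (v::complex^3)) = s *s v"
  by (simp add: vector_smult_assoc)

lemma vrearr1: "x *s (B::complex^3) - y *s A = (-y) *s A + x *s B"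
  by (simp add: vec_eq_iff algebra_simps)

lemma vrearr2: "- (x *s (D::complex^3) - y *s C) = y *s C + (-x) *s D"
  by (simp add: vec_eq_iff algebra_simps)

lemma step:
  fixes H :: "(complex^3)^'n::finite"
  assumes arr: "line_arrangement H" and good: "good H \<Psi> T" and jT: "j \<notin> T"
    and cM: "card (mult_pts H (insert j T) \<inter> line_pts (H$j)) < 3"
  shows "\<exists>\<Phi>. good H \<Phi> (insert j T)"
proof -
  define M where "M = mult_pts H (insert j T) \<inter> line_pts (H$j)"
  note gg = good[unfolded good_def]
  note g1 = conjunct1[OF gg] and g4 = conjunct2[OF conjunct2[OF conjunct2[OF gg]]]
    and g3 = conjunct1[OF conjunct2[OF conjunct2[OF gg]]]
  have fin: "finite M" unfolding M_def using M_finite[OF arr jT] .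
  have pairs: "\<exists>a\<in>T. \<exists>b\<in>T. a \<noteq> b \<and> P \<in> line_pts (H$a) \<and> P \<in> line_pts (H$b)" if "P \<in> M" for P
    using pair_exists[of P H j T] that jT unfolding M_def by blast
  have Pj: "P \<in> line_pts (H$j)" if "P \<in> M" for P using that unfolding M_def by blast
  have loc: "\<Psi> z $ a = \<Psi> z' $ a" if "a \<in> T" "\<forall>i\<in>insert j T. z$i = z'$i" for z z' a
  proof -
    have "\<forall>i\<in>T. z $ i = z' $ i" using that by blast
    then show ?thesis using g4 that(1) by blast
  qed
  have locu: "\<Psi> (upd z j w) $ a = \<Psi> z $ a" if "a \<in> T" for z w a
  proof -
    have "\<forall>i\<in>T. upd z j w $ i = z $ i" using jT by auto
    then show ?thesis using g4 that by blast
  qed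
  have plvT: "plv (\<lambda>z. \<Psi> z $ a)" if "a \<in> T" for a using g1 that by blast
  consider "M = {}" | P where "M = {P}" | P Q where "P \<noteq> Q" "M = {P,Q}"
    using card_cases3[OF fin cM[folded M_def]] by blast
  then show ?thesis
  proof cases
    case 1
    show ?thesis
    proof (rule exI, rule step_generic[OF good jT, of "\<lambda>z. z$j"])
      show "plv (\<lambda>z. z $ j)" by (rule plv_coord)
    next
      fix z z' :: "(complex^3)^'n" assume "\<forall>i\<in>insert j T. z $ i = z' $ i"
      then show "z $ j = z' $ j" by blast
    next
      fix P assume "P \<in> mult_pts H (insert j T) \<inter> line_pts (H $ j)"
      then show "\<exists>a\<in>T. \<exists>b\<in>T. a \<noteq> b \<and> P \<in> line_pts (H $ a) \<and> P \<in> line_pts (H $ b) \<and>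
            (\<forall>z. \<exists>s t. z $ j = s *s \<Psi> z $ a + t *s \<Psi> z $ b)" using 1 unfolding M_def by blast
    next
      fix G z assume "realG H G"
      then show "\<exists>w c. c \<noteq> 0 \<and> upd z j w $ j = c *s G $ j"
        by (intro exI[of _ "G$j"] exI[of _ 1]) simp
    qed
  next
    case (2 P)
    then obtain a b where ab: "a \<in> T" "b \<in> T" "a \<noteq> b" "P \<in> line_pts (H$a)" "P \<in> line_pts (H$b)"
      using pairs by blast
    have PjH: "P \<in> line_pts (H$j)" using Pj 2 by blast
    have aj: "a \<noteq> j" "b \<noteq> j" using ab jT by auto
    define NEW where "NEW = (\<lambda>z::(complex^3)^'n. (z$j$1) *s \<Psi> z $ a + (z$j$2) *s \<Psi> z $ b)"
    show ?thesis
    proof (rule exI, rule step_generic[OF good jT, of NEW])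
      show "plv NEW" unfolding NEW_def
        by (intro plv_comb plin_coord plvT ab)
    next
      fix z z' :: "(complex^3)^'n" assume h: "\<forall>i\<in>insert j T. z $ i = z' $ i"
      then show "NEW z = NEW z'" unfolding NEW_def using loc[OF ab(1) h] loc[OF ab(2) h] by simp
    next
      fix P' assume "P' \<in> mult_pts H (insert j T) \<inter> line_pts (H $ j)"
      then have "P' = P" using 2 unfolding M_def by blast
      then show "\<exists>a\<in>T. \<exists>b\<in>T. a \<noteq> b \<and> P' \<in> line_pts (H $ a) \<and> P' \<in> line_pts (H $ b) \<and>
            (\<forall>z. \<exists>s t. NEW z = s *s \<Psi> z $ a + t *s \<Psi> z $ b)"
        using ab unfolding NEW_def by blast
    next
      fix G z assume G: "realG H G" and z: "\<forall>i\<in>T. \<exists>c. c \<noteq> 0 \<and> \<Psi> z $ i = c *s G $ i"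
      obtain ca cb where c: "ca \<noteq> 0" "\<Psi> z $ a = ca *s G$a" "cb \<noteq> 0" "\<Psi> z $ b = cb *s G$b"
        using z ab by blast
      have "conc H a b j" unfolding conc_def using ab PjH by blast
      then have "det3 (G$a) (G$b) (G$j) = 0" using realG_conc_det[OF G ab(3) aj(2)] aj by metis
      moreover have "cross (G$a) (G$b) \<noteq> 0" using realG_cross[OF G ab(3)] .
      ultimately obtain s t where st: "G$j = s *s G$a + t *s G$b" using span2 by blast
      show "\<exists>w c. c \<noteq> 0 \<and> NEW (upd z j w) = c *s G $ j"
        apply (rule exI[of _ "vector [s/ca, t/cb, 0]"], rule exI[of _ 1])
        unfolding NEW_def using c st by (simp add: locu ab smult_cancel)
    qed
  next
    case (3 P Q)
    then obtain a b where ab: "a \<in> T" "b \<in> T" "a \<noteq> b" "P \<in> line_pts (H$a)" "P \<in> line_pts (H$b)"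
      using pairs by blast
    obtain c d where cd: "c \<in> T" "d \<in> T" "c \<noteq> d" "Q \<in> line_pts (H$c)" "Q \<in> line_pts (H$d)"
      using pairs 3 by blast
    define NEW where "NEW = (\<lambda>z::(complex^3)^'n. cross (cross (\<Psi> z $ a) (\<Psi> z $ b)) (cross (\<Psi> z $ c) (\<Psi> z $ d)))"
    have NEW1: "NEW z = (- det3 (\<Psi> z $ c) (\<Psi> z $ d) (\<Psi> z $ b)) *s \<Psi> z $ a +
        det3 (\<Psi> z $ c) (\<Psi> z $ d) (\<Psi> z $ a) *s \<Psi> z $ b" for z
      unfolding NEW_def cross_cross2 by (rule vrearr1)
    have NEW2: "NEW z = det3 (\<Psi> z $ a) (\<Psi> z $ b) (\<Psi> z $ d) *s \<Psi> z $ c +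
        (- det3 (\<Psi> z $ a) (\<Psi> z $ b) (\<Psi> z $ c)) *s \<Psi> z $ d" for z
    proof -
      have "NEW z = - cross (cross (\<Psi> z $ c) (\<Psi> z $ d)) (cross (\<Psi> z $ a) (\<Psi> z $ b))"
        unfolding NEW_def by (rule cross_anti)
      then show ?thesis by (simp only: cross_cross2 vrearr2)
    qed
    show ?thesis
    proof (rule exI, rule step_generic[OF good jT, of NEW])
      show "plv NEW" unfolding NEW_def
        by (intro plv_cross plvT ab cd)
    next
      fix z z' :: "(complex^3)^'n" assume h: "\<forall>i\<in>insert j T. z $ i = z' $ i"
      then show "NEW z = NEW z'" unfolding NEW_def
        using loc[OF ab(1) h] loc[OF ab(2) h] loc[OF cd(1) h] loc[OF cd(2) h] by simp
    next
      fix P' assume "P' \<in> mult_pts H (insert j T) \<inter> line_pts (H $ j)"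
      then have "P' = P \<or> P' = Q" using 3 unfolding M_def by blast
      then show "\<exists>a\<in>T. \<exists>b\<in>T. a \<noteq> b \<and> P' \<in> line_pts (H $ a) \<and> P' \<in> line_pts (H $ b) \<and>
            (\<forall>z. \<exists>s t. NEW z = s *s \<Psi> z $ a + t *s \<Psi> z $ b)"
      proof
        assume "P' = P" then show ?thesis using ab NEW1 by blast
      next
        assume "P' = Q" then show ?thesis using cd NEW2 by blast
      qed
    next
      fix G z assume G: "realG H G" and z: "\<forall>i\<in>T. \<exists>c. c \<noteq> 0 \<and> \<Psi> z $ i = c *s G $ i"
      obtain ka kb kc kd where k: "ka \<noteq> 0" "\<Psi> z $ a = ka *s G$a" "kb \<noteq> 0" "\<Psi> z $ b = kb *s G$b"
        "kc \<noteq> 0" "\<Psi> z $ c = kc *s G$c" "kd \<noteq> 0" "\<Psi> z $ d = kd *s G$d"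
        using z ab cd by meson
      define X where "X = cross (cross (G$a) (G$b)) (cross (G$c) (G$d))"
      have NX: "NEW (upd z j w) = (ka*kb*(kc*kd)) *s X" for w
        unfolding NEW_def X_def using ab cd k by (simp add: locu cross_scale vector_smult_assoc)
      have X0: "X \<noteq> 0"
      proof
        assume "X = 0"
        then have "(- det3 (G$c) (G$d) (G$b)) *s G$a + det3 (G$c) (G$d) (G$a) *s G$b = 0"
          unfolding X_def cross_cross2 vrearr1 .
        then have dz': "- det3 (G$c) (G$d) (G$b) = 0 \<and> det3 (G$c) (G$d) (G$a) = 0"
          by (rule indep2[OF realG_cross[OF G ab(3)]])
        then have dz: "det3 (G$c) (G$d) (G$b) = 0" "det3 (G$c) (G$d) (G$a) = 0" by auto
        have "Q \<in> line_pts (H$a)" using on_third[OF arr G cd(3-5) dz(2)] .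
        moreover have "Q \<in> line_pts (H$b)" using on_third[OF arr G cd(3-5) dz(1)] .
        ultimately have "Q = P" using pt_cross ab arr_cross[OF arr ab(3)] by metis
        then show False using 3 by simp
      qed
      have aj: "a \<noteq> j" "b \<noteq> j" "c \<noteq> j" "d \<noteq> j" using ab cd jT by auto
      have PjH: "P \<in> line_pts (H$j)" "Q \<in> line_pts (H$j)" using Pj 3 by blast+
      have "conc H a b j" unfolding conc_def using ab PjH by blast
      then have d1: "det3 (G$a) (G$b) (G$j) = 0" using realG_conc_det[OF G ab(3) aj(2)] aj by metis
      have "conc H c d j" unfolding conc_def using cd PjH by blast
      then have d2: "det3 (G$c) (G$d) (G$j) = 0" using realG_conc_det[OF G cd(3) aj(4)] aj by metis
      have pc: "pair3 u v = pair3 v u" for u v by (simp add: pair3_exp algebra_simps)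
      have e1: "pair3 (cross (G$a) (G$b)) (G$j) = 0" using d1 by (simp add: det3_exp pc)
      have e2: "pair3 (cross (G$c) (G$d)) (G$j) = 0" using d2 by (simp add: det3_exp pc)
      have "cross X (G$j) = pair3 (cross (G$a) (G$b)) (G$j) *s cross (G$c) (G$d) -
          pair3 (cross (G$c) (G$d)) (G$j) *s cross (G$a) (G$b)"
        unfolding X_def by (rule cross_cross)
      then have "cross X (G$j) = 0" using e1 e2 by simp
      then obtain \<mu> where mu: "G$j = \<mu> *s X" using L0[OF X0] by blast
      have "\<mu> \<noteq> 0" using mu realG_nz[OF G, of j] by auto
      then show "\<exists>w c. c \<noteq> 0 \<and> NEW (upd z j w) = c *s G $ j"
        using k NX mu by (intro exI[of _ 0] exI[of _ "ka*kb*(kc*kd)/\<mu>"]) (simp add: vector_smult_assoc)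
    qed
  qed
qed

lemma all_good:
  fixes H :: "(complex^3)^'n::finite"
  assumes arr: "line_arrangement H"
    and hyp: "\<And>S. S \<noteq> {} \<Longrightarrow> \<exists>j\<in>S. card (mult_pts H S \<inter> line_pts (H$j)) < 3"
  shows "\<exists>\<Phi>. good H \<Phi> S"
proof (induction "card S" arbitrary: S rule: less_induct)
  case less
  show ?case
  proof (cases "S = {}")
    case True
    have "good H (\<lambda>z. z) S" unfolding good_def True by simp
    then show ?thesis by blast
  next
    case False
    obtain j where j: "j \<in> S" "card (mult_pts H S \<inter> line_pts (H$j)) < 3" using hyp[OF False] by blast
    have "card (S - {j}) < card S" by (rule card_Diff1_less[OF finite j(1)])
    then obtain \<Psi> where \<Psi>: "good H \<Psi> (S - {j})" using less by blast
    have S: "S = insert j (S - {j})" using j by auto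
    have "\<exists>\<Phi>. good H \<Phi> (insert j (S - {j}))"
      by (rule step[OF arr \<Psi>]) (use j S in auto)
    then show ?thesis using S by simp
  qed
qed

definition Ugood :: "(complex^3)^'n::finite \<Rightarrow> ((complex^3)^'n \<Rightarrow> (complex^3)^'n) \<Rightarrow> ((complex^3)^'n) set" where
  "Ugood H \<Phi> = {z. (\<forall>i. \<Phi> z $ i \<noteq> 0) \<and> (\<forall>i j. i \<noteq> j \<longrightarrow> cross (\<Phi> z $ i) (\<Phi> z $ j) \<noteq> 0) \<and>
     (\<forall>i j k. i \<noteq> j \<and> j \<noteq> k \<and> i \<noteq> k \<and> {i,j,k} \<notin> intersection_lattice H \<longrightarrow>
        det3 (\<Phi> z $ i) (\<Phi> z $ j) (\<Phi> z $ k) \<noteq> 0)}"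

lemma finite_bad:
  fixes \<Phi> :: "(complex^3)^'n::finite \<Rightarrow> (complex^3)^'n"
  assumes pl: "\<forall>i. plv (\<lambda>z. \<Phi> z $ i)" and z1: "z1 \<in> Ugood H \<Phi>"
  shows "finite {l. line z1 z2 l \<notin> Ugood H \<Phi>}"
proof -
  let ?L = "line z1 z2"
  have z1u: "(\<forall>i. \<Phi> z1 $ i \<noteq> 0) \<and> (\<forall>i j. i \<noteq> j \<longrightarrow> cross (\<Phi> z1 $ i) (\<Phi> z1 $ j) \<noteq> 0) \<and>
    (\<forall>i j k. i \<noteq> j \<and> j \<noteq> k \<and> i \<noteq> k \<and> {i,j,k} \<notin> intersection_lattice H \<longrightarrow>
        det3 (\<Phi> z1 $ i) (\<Phi> z1 $ j) (\<Phi> z1 $ k) \<noteq> 0)" using z1 unfolding Ugood_def by (rule CollectD)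
  note z1' = conjunct1[OF z1u] conjunct1[OF conjunct2[OF z1u]] conjunct2[OF conjunct2[OF z1u]]
  have f1: "finite {l. \<Phi> (?L l) $ i = 0}" for i
    using plv_finite[OF pl[rule_format] z1'(1)[rule_format]] .
  have f2: "finite {l. i \<noteq> j \<and> cross (\<Phi> (?L l) $ i) (\<Phi> (?L l) $ j) = 0}" for i j
  proof (cases "i = j")
    case False
    have "finite {l. cross (\<Phi> (?L l) $ i) (\<Phi> (?L l) $ j) = 0}"
      using plv_finite[where F="\<lambda>z. cross (\<Phi> z $ i) (\<Phi> z $ j)", OF plv_cross[OF pl[rule_format] pl[rule_format]]]
        z1'(2) False by blast
    then show ?thesis by (rule rev_finite_subset) auto
  qed simp
  have f3: "finite {l. i \<noteq> j \<and> j \<noteq> k \<and> i \<noteq> k \<and> {i,j,k} \<notin> intersection_lattice H \<and>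
       det3 (\<Phi> (?L l) $ i) (\<Phi> (?L l) $ j) (\<Phi> (?L l) $ k) = 0}" for i j k
  proof (cases "i \<noteq> j \<and> j \<noteq> k \<and> i \<noteq> k \<and> {i,j,k} \<notin> intersection_lattice H")
    case True
    have "finite {l. det3 (\<Phi> (?L l) $ i) (\<Phi> (?L l) $ j) (\<Phi> (?L l) $ k) = 0}"
      using plin_finite[where g="\<lambda>z. det3 (\<Phi> z $ i) (\<Phi> z $ j) (\<Phi> z $ k)",
          OF plin_det3[OF pl[rule_format] pl[rule_format] pl[rule_format]]]
        z1'(3) True by blast
    then show ?thesis by (rule rev_finite_subset) auto
  qed auto
  have "{l. ?L l \<notin> Ugood H \<Phi>} \<subseteq> (\<Union>i. {l. \<Phi> (?L l) $ i = 0}) \<union>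
      (\<Union>i. \<Union>j. {l. i \<noteq> j \<and> cross (\<Phi> (?L l) $ i) (\<Phi> (?L l) $ j) = 0}) \<union>
      (\<Union>i. \<Union>j. \<Union>k. {l. i \<noteq> j \<and> j \<noteq> k \<and> i \<noteq> k \<and> {i,j,k} \<notin> intersection_lattice H \<and>
       det3 (\<Phi> (?L l) $ i) (\<Phi> (?L l) $ j) (\<Phi> (?L l) $ k) = 0})"
  proof (rule subsetI)
    fix l assume "l \<in> {l. ?L l \<notin> Ugood H \<Phi>}"
    then have "\<not> ((\<forall>i. \<Phi> (?L l) $ i \<noteq> 0) \<and> (\<forall>i j. i \<noteq> j \<longrightarrow> cross (\<Phi> (?L l) $ i) (\<Phi> (?L l) $ j) \<noteq> 0) \<and>
     (\<forall>i j k. i \<noteq> j \<and> j \<noteq> k \<and> i \<noteq> k \<and> {i,j,k} \<notin> intersection_lattice H \<longrightarrow>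
        det3 (\<Phi> (?L l) $ i) (\<Phi> (?L l) $ j) (\<Phi> (?L l) $ k) \<noteq> 0))"
      unfolding Ugood_def by simp
    then have nn: "(\<exists>i. \<Phi> (?L l) $ i = 0) \<or> (\<exists>i j. i \<noteq> j \<and> cross (\<Phi> (?L l) $ i) (\<Phi> (?L l) $ j) = 0) \<or>
     (\<exists>i j k. (i \<noteq> j \<and> j \<noteq> k \<and> i \<noteq> k \<and> {i,j,k} \<notin> intersection_lattice H) \<and>
        det3 (\<Phi> (?L l) $ i) (\<Phi> (?L l) $ j) (\<Phi> (?L l) $ k) = 0)"
      unfolding de_Morgan_conj not_all not_imp not_not by simp
    then consider (a) i where "\<Phi> (?L l) $ i = 0" | (b) i j where "i \<noteq> j" "cross (\<Phi> (?L l) $ i) (\<Phi> (?L l) $ j) = 0"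
      | (c) i j k where "i \<noteq> j \<and> j \<noteq> k \<and> i \<noteq> k \<and> {i,j,k} \<notin> intersection_lattice H"
          "det3 (\<Phi> (?L l) $ i) (\<Phi> (?L l) $ j) (\<Phi> (?L l) $ k) = 0"
      by (elim disjE exE conjE) auto
    then show "l \<in> (\<Union>i. {l. \<Phi> (?L l) $ i = 0}) \<union>
      (\<Union>i. \<Union>j. {l. i \<noteq> j \<and> cross (\<Phi> (?L l) $ i) (\<Phi> (?L l) $ j) = 0}) \<union>
      (\<Union>i. \<Union>j. \<Union>k. {l. i \<noteq> j \<and> j \<noteq> k \<and> i \<noteq> k \<and> {i,j,k} \<notin> intersection_lattice H \<and>
       det3 (\<Phi> (?L l) $ i) (\<Phi> (?L l) $ j) (\<Phi> (?L l) $ k) = 0})"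
    proof cases
      case (a i) show ?thesis
        by (rule UnI1, rule UnI1, rule UN_I[where a=i, OF UNIV_I]) (simp add: a)
    next
      case (b i j) show ?thesis
        by (rule UnI1, rule UnI2, rule UN_I[where a=i, OF UNIV_I], rule UN_I[where a=j, OF UNIV_I]) (simp add: b)
    next
      case (c i j k) show ?thesis
        by (rule UnI2, rule UN_I[where a=i, OF UNIV_I], rule UN_I[where a=j, OF UNIV_I], rule UN_I[where a=k, OF UNIV_I]) (use c in simp)
    qed
  qed
  moreover have "finite ((\<Union>i. {l. \<Phi> (?L l) $ i = 0}) \<union>
      (\<Union>i. \<Union>j. {l. i \<noteq> j \<and> cross (\<Phi> (?L l) $ i) (\<Phi> (?L l) $ j) = 0}) \<union>
      (\<Union>i. \<Union>j. \<Union>k. {l. i \<noteq> j \<and> j \<noteq> k \<and> i \<noteq> k \<and> {i,j,k} \<notin> intersection_lattice H \<and>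
       det3 (\<Phi> (?L l) $ i) (\<Phi> (?L l) $ j) (\<Phi> (?L l) $ k) = 0}))"
    using f1 f2 f3 by simp
  ultimately show ?thesis by (rule finite_subset)
qed

lemma Ugood_nz: "z \<in> Ugood H \<Phi> \<Longrightarrow> \<Phi> z \<in> nonzero_tuples"
  unfolding Ugood_def nonzero_tuples_def by (drule CollectD, drule conjunct1) simp

lemma pc_lemma:
  fixes \<Phi> :: "(complex^3)^'n::finite \<Rightarrow> (complex^3)^'n"
  assumes pl: "\<forall>i. plv (\<lambda>z. \<Phi> z $ i)"
  shows "path_connectedin proj_tuple_topology (proj_tuple ` \<Phi> ` Ugood H \<Phi>)"
proof -
  let ?U = "Ugood H \<Phi>" and ?W = "proj_tuple ` \<Phi> ` Ugood H \<Phi>"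
  have nzU: "\<Phi> z \<in> nonzero_tuples" if "z \<in> ?U" for z
    using that by (rule Ugood_nz)
  have sub: "?W \<subseteq> topspace proj_tuple_topology"
    unfolding topspace_ptt using nzU by (auto intro: imageI)
  have "\<exists>h. pathin (subtopology proj_tuple_topology ?W) h \<and> h 0 = proj_tuple (\<Phi> z1) \<and> h 1 = proj_tuple (\<Phi> z2)"
    if z1: "z1 \<in> ?U" and z2: "z2 \<in> ?U" for z1 z2
  proof -
    define f where "f l = \<Phi> (line z1 z2 l)" for l
    define B where "B = {l. line z1 z2 l \<notin> ?U}"
    have finB: "finite B" unfolding B_def using finite_bad[OF pl z1] .
    have "path_connected (- B)"
      by (rule path_connected_complement_countable) (simp_all add: countable_finite finB)
    moreover have "0 \<in> - B" "1 \<in> - B" unfolding B_def using z1 z2 by simp_all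
    ultimately obtain g where g: "path g" "path_image g \<subseteq> - B" "pathstart g = 0" "pathfinish g = 1"
      unfolding path_connected_def by blast
    have comp: "continuous_on UNIV (\<lambda>l. f l $ i $ m)" for i m
      unfolding f_def by (rule plin_cont[OF plv_comp[OF pl[rule_format]]])
    have fcont: "continuous_on UNIV f"
    proof -
      have "continuous_on UNIV (\<lambda>l. \<chi> i. \<chi> m. f l $ i $ m)"
        by (intro continuous_on_vec_lambda comp)
      then show ?thesis by simp
    qed
    have gin: "line z1 z2 (g t) \<in> ?U" if "t \<in> {0..1}" for t
      using g(2) that unfolding path_image_def B_def by blast
    have fgc: "continuous_on {0..1} (f \<circ> g)"
      using continuous_on_compose[OF g(1)[unfolded path_def] continuous_on_subset[OF fcont]] by simp
    have cm: "continuous_map (subtopology euclideanreal {0..1}) (top_of_set nonzero_tuples) (f \<circ> g)"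
      unfolding continuous_map_in_subtopology using fgc gin nzU unfolding f_def by auto
    have ph: "pathin proj_tuple_topology (proj_tuple \<circ> (f \<circ> g))"
      unfolding pathin_def using continuous_map_compose[OF cm cont_proj_tuple] .
    show ?thesis
    proof (intro exI conjI)
      show "pathin (subtopology proj_tuple_topology ?W) (proj_tuple \<circ> (f \<circ> g))"
        unfolding pathin_subtopology using ph gin unfolding f_def by auto
      show "(proj_tuple \<circ> (f \<circ> g)) 0 = proj_tuple (\<Phi> z1)"
        using g(3) unfolding pathstart_def f_def by simp
      show "(proj_tuple \<circ> (f \<circ> g)) 1 = proj_tuple (\<Phi> z2)"
        using g(4) unfolding pathfinish_def f_def by simp
    qed
  qed
  then show ?thesis unfolding path_connectedin_def path_connected_space_def
    using sub by (auto simp: topspace_subtopology)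
qed

lemma smult_nz: "c \<noteq> 0 \<Longrightarrow> (v::complex^3) \<noteq> 0 \<Longrightarrow> c *s v \<noteq> 0"
  by (auto simp: vec_eq_iff)

lemma R_eq:
  fixes H :: "(complex^3)^'n::finite"
  assumes g: "good H \<Phi> UNIV"
  shows "realization_space (intersection_lattice H) = proj_tuple ` \<Phi> ` Ugood H \<Phi>"
proof
  note gg = g[unfolded good_def]
  note g2 = conjunct1[OF conjunct2[OF gg]]
    and g3 = conjunct1[OF conjunct2[OF conjunct2[OF gg]]]
  show "realization_space (intersection_lattice H) \<subseteq> proj_tuple ` \<Phi> ` Ugood H \<Phi>"
  proof
    fix x assume "x \<in> realization_space (intersection_lattice H)"
    then have "\<exists>G. x = proj_tuple G \<and> G \<in> nonzero_tuples \<and>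
      (\<forall>i j. i \<noteq> j \<longrightarrow> proj_pt (G $ i) \<noteq> proj_pt (G $ j)) \<and>
      (\<forall>i j k. i \<noteq> j \<and> j \<noteq> k \<and> i \<noteq> k \<longrightarrow>
          (det3 (G $ i) (G $ j) (G $ k) = 0 \<longleftrightarrow> {i, j, k} \<in> intersection_lattice H))"
      unfolding realization_space_def by (rule CollectD)
    then obtain G where GG: "x = proj_tuple G \<and> G \<in> nonzero_tuples \<and>
      (\<forall>i j. i \<noteq> j \<longrightarrow> proj_pt (G $ i) \<noteq> proj_pt (G $ j)) \<and>
      (\<forall>i j k. i \<noteq> j \<and> j \<noteq> k \<and> i \<noteq> k \<longrightarrow>
          (det3 (G $ i) (G $ j) (G $ k) = 0 \<longleftrightarrow> {i, j, k} \<in> intersection_lattice H))"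
      by (rule exE)
    note G = conjunct1[OF GG] conjunct1[OF conjunct2[OF GG]] conjunct1[OF conjunct2[OF conjunct2[OF GG]]]
      conjunct2[OF conjunct2[OF conjunct2[OF GG]]]
    have nz: "\<forall>i. G $ i \<noteq> 0" using G(2) unfolding nonzero_tuples_def by simp
    have rG: "realG H G" unfolding realG_def by (rule conjI[OF nz conjI[OF G(3) G(4)]])
    obtain z where z: "\<forall>i. \<exists>c. c \<noteq> 0 \<and> \<Phi> z $ i = c *s G$i" using g3 rG by blast
    then obtain cf where cf: "\<And>i. cf i \<noteq> 0" "\<And>i. \<Phi> z $ i = cf i *s G$i" by metis
    have "z \<in> Ugood H \<Phi>" unfolding Ugood_def mem_Collect_eq
    proof (intro conjI allI impI)
      fix i show "\<Phi> z $ i \<noteq> 0" using cf smult_nz realG_nz[OF rG] by simp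
    next
      fix i j :: 'n assume "i \<noteq> j"
      then show "cross (\<Phi> z $ i) (\<Phi> z $ j) \<noteq> 0"
        using cf realG_cross[OF rG] by (simp add: cross_scale smult_nz)
    next
      fix i j k :: 'n assume h: "i \<noteq> j \<and> j \<noteq> k \<and> i \<noteq> k \<and> {i, j, k} \<notin> intersection_lattice H"
      then have "det3 (G$i) (G$j) (G$k) \<noteq> 0" using realG_D3[OF rG] by blast
      then show "det3 (\<Phi> z $ i) (\<Phi> z $ j) (\<Phi> z $ k) \<noteq> 0"
        using cf by (simp add: det3_scale)
    qed
    moreover have "x = proj_tuple (\<Phi> z)"
      unfolding G(1) proj_tuple_def using cf proj_pt_scale by simp
    ultimately show "x \<in> proj_tuple ` \<Phi> ` Ugood H \<Phi>" by blast
  qed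
next
  note gg = g[unfolded good_def]
  note g2 = conjunct1[OF conjunct2[OF gg]]
  show "proj_tuple ` \<Phi> ` Ugood H \<Phi> \<subseteq> realization_space (intersection_lattice H)"
  proof
    fix x assume "x \<in> proj_tuple ` \<Phi> ` Ugood H \<Phi>"
    then obtain z where x: "x = proj_tuple (\<Phi> z)" and z: "z \<in> Ugood H \<Phi>" by blast
    have zu: "(\<forall>i. \<Phi> z $ i \<noteq> 0) \<and> (\<forall>i j. i \<noteq> j \<longrightarrow> cross (\<Phi> z $ i) (\<Phi> z $ j) \<noteq> 0) \<and>
      (\<forall>i j k. i \<noteq> j \<and> j \<noteq> k \<and> i \<noteq> k \<and> {i,j,k} \<notin> intersection_lattice H \<longrightarrow>
        det3 (\<Phi> z $ i) (\<Phi> z $ j) (\<Phi> z $ k) \<noteq> 0)" using z unfolding Ugood_def by (rule CollectD)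
    note z1 = conjunct1[OF zu] and z2 = conjunct1[OF conjunct2[OF zu]] and z3 = conjunct2[OF conjunct2[OF zu]]
    have nz: "\<Phi> z \<in> nonzero_tuples" using z by (rule Ugood_nz)
    have dist: "\<forall>i j. i \<noteq> j \<longrightarrow> proj_pt (\<Phi> z $ i) \<noteq> proj_pt (\<Phi> z $ j)"
    proof (intro allI impI)
      fix i j :: 'n assume "i \<noteq> j"
      then show "proj_pt (\<Phi> z $ i) \<noteq> proj_pt (\<Phi> z $ j)"
        using proj_pt_eq_iff[of "\<Phi> z $ i" "\<Phi> z $ j"] z1 z2 by simp
    qed
    have dets: "det3 (\<Phi> z $ i) (\<Phi> z $ j) (\<Phi> z $ k) = 0 \<longleftrightarrow> {i, j, k} \<in> intersection_lattice H"
      if h: "i \<noteq> j \<and> j \<noteq> k \<and> i \<noteq> k" for i j k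
    proof
      assume "det3 (\<Phi> z $ i) (\<Phi> z $ j) (\<Phi> z $ k) = 0"
      then show "{i, j, k} \<in> intersection_lattice H" using z3[rule_format, of i j k] h by auto
    next
      assume "{i, j, k} \<in> intersection_lattice H"
      then have "conc H i j k" using I_iff[of i j k H] h by simp
      then show "det3 (\<Phi> z $ i) (\<Phi> z $ j) (\<Phi> z $ k) = 0" using h by (intro g2[rule_format]) auto
    qed
    have detsall: "\<forall>i j k. i \<noteq> j \<and> j \<noteq> k \<and> i \<noteq> k \<longrightarrow>
          (det3 (\<Phi> z $ i) (\<Phi> z $ j) (\<Phi> z $ k) = 0 \<longleftrightarrow> {i, j, k} \<in> intersection_lattice H)"
      using dets by blast
    show "x \<in> realization_space (intersection_lattice H)"
      unfolding realization_space_def mem_Collect_eq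
      by (rule exI[of _ "\<Phi> z"]) (intro conjI x nz dist detsall)
  qed
qed

theorem mainTheorem4:
  fixes H :: "(complex^3)^'n::finite"
  assumes "line_arrangement H"
    and "\<not> connectedin proj_tuple_topology (realization_space (intersection_lattice H))"
  shows "\<exists>S. S \<noteq> {} \<and> (\<forall>j\<in>S. card (mult_pts H S \<inter> line_pts (H $ j)) \<ge> 3)"
proof (rule ccontr)
  assume neg: "\<not> ?thesis"
  have hyp: "\<exists>j\<in>S. card (mult_pts H S \<inter> line_pts (H$j)) < 3" if "S \<noteq> {}" for S
  proof -
    have "\<not> (\<forall>j\<in>S. card (mult_pts H S \<inter> line_pts (H $ j)) \<ge> 3)" using neg that by blast
    then show ?thesis by (auto simp: not_le)
  qed
  obtain \<Phi> where g: "good H \<Phi> UNIV" using all_good[OF assms(1) hyp] by blast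
  have pl: "\<forall>i. plv (\<lambda>z. \<Phi> z $ i)" using conjunct1[OF g[unfolded good_def]] by simp
  have "connectedin proj_tuple_topology (realization_space (intersection_lattice H))"
    unfolding R_eq[OF g] by (rule path_connectedin_imp_connectedin[OF pc_lemma[OF pl]])
  then show False using assms(2) by contradiction
qed

end
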